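(* Let $s<-s^{neg}$ and suppose $m\in P\cap\mathbb Z^n$ lies in a negative-definite island $U$ of $g_s$. Then the pointwise norm of $\sigma^m_s$, which is $\mathbb T^n$-invariant and hence a function of $x$, is minimized at $m$ and is strictly increasing along each ray emanating from $m$, from $m$ up to the point where the ray meets the boundary of $U$.
   Context: Let $P=\{x\in\mathbb R^n:\ell_j(x)=\langle\nu_j,x\rangle+\lambda_j\ge0,\ j=1,\dots,r\}$ be a Delzant polytope with interior $\check P$, $(X_P,\omega)$ the associated compact symplectic toric manifold with action-angle coordinates $(x,\theta)$ on $\check X_P\cong\check P\times\mathbb T^n$, $\omega=\sum dx^j\wedge d\theta_j$. $L$ is a Hermitian prequantum line bundle with unitary trivialization $\mathbbm1$ over $\check X_P$ and $\nabla\mathbbm1=-i\sum x^jd\theta_j\mathbbm1$. Let $g_P=\frac12\sum\ell_j\log\ell_j$, $\psi\in C^\infty(P)$ strongly convex (positive definite Hessian on $P$), $g_s=g_P+s\psi$ with Hessian $H_s$ and $y_s=\partial g_s/\partial x$. The polarized section $\sigma^m_s$ is given on $\check X_P$ by $\sigma^m_s=e^{m\cdot(y_s+i\theta)}e^{-(x\cdot y_s-g_s)}\mathbbm1$, so its pointwise norm is $|\sigma^m_s|=e^{(m-x)\cdot y_s+g_s}$. A negative-definite island of $g_s$ is a connected component of $\{x\in\check P:H_s(x)\text{ negative definite}\}$. $s^{cvx}\ge0$ denotes the smallest number such that $g_s$ is convex on $\check P$ for all $s>-s^{cvx}$, and $s^{neg}\ge s^{cvx}$ the smallest number such that for all $s<-s^{neg}$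 the function $g_s$ has a nonempty negative-definite island. *)

theory Defs
  imports "HOL-Analysis.Analysis"
begin

text \<open>Points of R^n are vectors real^'n for a finite index type 'n (n = CARD('n)).
  The polytope is given by r affine functions l_j(x) = nu_j . x + lam_j, j < r.\<close>

definition aff :: "(nat \<Rightarrow> real^'n) \<Rightarrow> (nat \<Rightarrow> real) \<Rightarrow> nat \<Rightarrow> real^'n \<Rightarrow> real" where
  "aff nu lam j x = inner (nu j) x + lam j"

definition polytope_P :: "(nat \<Rightarrow> real^'n) \<Rightarrow> (nat \<Rightarrow> real) \<Rightarrow> nat \<Rightarrow> (real^'n) set" where
  "polytope_P nu lam r = {x. \<forall>j<r. aff nu lam j x \<ge> 0}"

definition int_vec :: "real^'n \<Rightarrow> bool" where
  "int_vec v \<longleftrightarrow> (\<forall>i. v $ i \<in> \<int>)"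

text \<open>Delzant condition: P is bounded with nonempty interior, the normals are integral,
  every inequality cuts out a facet, and at every vertex exactly n facets meet whose
  normals form a Z-basis of Z^n.\<close>
definition delzant :: "(nat \<Rightarrow> real^'n) \<Rightarrow> (nat \<Rightarrow> real) \<Rightarrow> nat \<Rightarrow> bool" where
  "delzant nu lam r \<longleftrightarrow>
     bounded (polytope_P nu lam r) \<and> interior (polytope_P nu lam r) \<noteq> {} \<and>
     (\<forall>j<r. int_vec (nu j)) \<and>
     (\<forall>j<r. \<exists>x\<in>polytope_P nu lam r. aff nu lam j x = 0 \<and>
              (\<forall>k<r. k \<noteq> j \<longrightarrow> aff nu lam k x > 0)) \<and>
     (\<forall>v. v extreme_point_of (polytope_P nu lam r) \<longrightarrow>
        (let J = {j. j < r \<and> aff nu lam j v = 0} in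
          card J = CARD('n) \<and>
          (\<forall>z::real^'n. int_vec z \<longrightarrow>
             (\<exists>c::nat \<Rightarrow> int. z = (\<Sum>j\<in>J. of_int (c j) *\<^sub>R nu j)))))"

definition grad :: "(real^'n \<Rightarrow> real) \<Rightarrow> real^'n \<Rightarrow> real^'n" where
  "grad f x = (\<chi> i. frechet_derivative f (at x) (axis i 1))"

definition hess :: "(real^'n \<Rightarrow> real) \<Rightarrow> real^'n \<Rightarrow> real^'n^'n" where
  "hess f x = (\<chi> i j. frechet_derivative (\<lambda>z. grad f z $ i) (at x) (axis j 1))"

definition pos_def :: "real^'n^'n \<Rightarrow> bool" where
  "pos_def A \<longleftrightarrow> (\<forall>v. v \<noteq> 0 \<longrightarrow> inner v (A *v v) > 0)"

definition neg_def :: "real^'n^'n \<Rightarrow> bool" where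
  "neg_def A \<longleftrightarrow> (\<forall>v. v \<noteq> 0 \<longrightarrow> inner v (A *v v) < 0)"

text \<open>C^infinity on an open set: all iterated partial derivatives exist (are differentiable).\<close>
definition partial :: "(real^'n \<Rightarrow> real) \<Rightarrow> 'n \<Rightarrow> real^'n \<Rightarrow> real" where
  "partial f i = (\<lambda>x. frechet_derivative f (at x) (axis i 1))"

definition smooth_on :: "(real^'n) set \<Rightarrow> (real^'n \<Rightarrow> real) \<Rightarrow> bool" where
  "smooth_on S f \<longleftrightarrow> (\<forall>is :: 'n list. (fold (\<lambda>i h. partial h i) is f) differentiable_on S)"

definition smooth_on_closed :: "(real^'n) set \<Rightarrow> (real^'n \<Rightarrow> real) \<Rightarrow> bool" where
  "smooth_on_closed P f \<longleftrightarrow> (\<exists>S. open S \<and> P \<subseteq> S \<and> smooth_on S f)"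

definition gP :: "(nat \<Rightarrow> real^'n) \<Rightarrow> (nat \<Rightarrow> real) \<Rightarrow> nat \<Rightarrow> real^'n \<Rightarrow> real" where
  "gP nu lam r x = (1/2) * (\<Sum>j<r. aff nu lam j x * ln (aff nu lam j x))"

definition gs :: "(nat \<Rightarrow> real^'n) \<Rightarrow> (nat \<Rightarrow> real) \<Rightarrow> nat \<Rightarrow> (real^'n \<Rightarrow> real) \<Rightarrow> real \<Rightarrow> real^'n \<Rightarrow> real" where
  "gs nu lam r psi s x = gP nu lam r x + s * psi x"

definition negdef_set where
  "negdef_set nu lam r psi s =
     {x \<in> interior (polytope_P nu lam r). neg_def (hess (gs nu lam r psi s) x)}"

definition island where
  "island nu lam r psi s U \<longleftrightarrow>
     (\<exists>x\<in>negdef_set nu lam r psi s. U = connected_component_set (negdef_set nu lam r psi s) x)"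

definition s_cvx where
  "s_cvx nu lam r psi = Inf {a::real. 0 \<le> a \<and>
      (\<forall>s. s > -a \<longrightarrow> convex_on (interior (polytope_P nu lam r)) (gs nu lam r psi s))}"

definition s_neg where
  "s_neg nu lam r psi = Inf {a::real. s_cvx nu lam r psi \<le> a \<and>
      (\<forall>s. s < -a \<longrightarrow> (\<exists>U. island nu lam r psi s U \<and> U \<noteq> {}))}"

definition sec_norm where
  "sec_norm nu lam r psi s (m::real^'n) x =
     exp (inner (m - x) (grad (gs nu lam r psi s) x) + gs nu lam r psi s x)"

end

theory Submission
  imports Defs
begin

lemma aff_deriv: "((aff nu lam j) has_derivative (\<lambda>h. inner (nu j) h)) F"
  unfolding aff_def by (auto intro!: derivative_eq_intros)

lemma int_pos:
  assumes "x \<in> interior (polytope_P nu lam r)" "j < r" "nu j \<noteq> 0"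
  shows "aff nu lam j x > 0"
proof -
  obtain e where e: "e > 0" "ball x e \<subseteq> polytope_P nu lam r"
    using assms(1) by (meson mem_interior)
  define y where "y = x - (e / 2 / norm (nu j)) *\<^sub>R nu j"
  have nn: "norm (nu j) > 0" using assms(3) by simp
  have "dist x y = e/2" using nn e by (simp add: y_def dist_norm)
  then have "y \<in> polytope_P nu lam r" using e by auto
  then have "aff nu lam j y \<ge> 0" using assms(2) by (simp add: polytope_P_def)
  moreover have "aff nu lam j y = aff nu lam j x - (e / 2 / norm (nu j)) * (norm (nu j))^2"
    by (simp add: aff_def y_def inner_diff_right power2_norm_eq_inner)
  moreover have "(e / 2 / norm (nu j)) * (norm (nu j))^2 = e/2 * norm (nu j)"
    using nn by (simp add: power2_eq_square)
  moreover have "e/2 * norm (nu j) > 0" using e nn by simp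
  ultimately show ?thesis by linarith
qed

lemma T_deriv:
  assumes "x \<in> interior (polytope_P nu lam r)" "j < r"
  shows "((\<lambda>z. aff nu lam j z * ln (aff nu lam j z)) has_derivative
           (\<lambda>h. inner (nu j) h * (ln (aff nu lam j x) + 1))) (at x)"
proof (cases "nu j = 0")
  case True
  then have "(\<lambda>z. aff nu lam j z * ln (aff nu lam j z)) = (\<lambda>z. lam j * ln (lam j))"
    by (simp add: aff_def)
  moreover have "(\<lambda>h. inner (nu j) h * (ln (aff nu lam j x) + 1)) = (\<lambda>h. 0)" using True by simp
  ultimately show ?thesis by simp
next
  case False
  then have p: "aff nu lam j x > 0" using int_pos assms by blast
  have "((\<lambda>z. aff nu lam j z * ln (aff nu lam j z)) has_derivative
           (\<lambda>h. aff nu lam j x * (inner (nu j) h * inverse (aff nu lam j x)) + inner (nu j) h * ln (aff nu lam j x))) (at x)"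
    by (rule has_derivative_mult[OF aff_deriv has_derivative_ln[OF p aff_deriv]])
  moreover have "(\<lambda>h. aff nu lam j x * (inner (nu j) h * inverse (aff nu lam j x)) + inner (nu j) h * ln (aff nu lam j x))
     = (\<lambda>h. inner (nu j) h * (ln (aff nu lam j x) + 1))" using p by (auto simp: field_simps)
  ultimately show ?thesis by simp
qed

definition FF where "FF nu lam r i z = 1/2 * (\<Sum>j<r. nu j $ i * (ln (aff nu lam j z) + 1))"

lemma gP_deriv:
  assumes "x \<in> interior (polytope_P nu lam r)"
  shows "(gP nu lam r has_derivative
           (\<lambda>h. 1/2 * (\<Sum>j<r. inner (nu j) h * (ln (aff nu lam j x) + 1)))) (at x)"
  unfolding gP_def[abs_def]
  by (intro has_derivative_mult_right has_derivative_sum T_deriv[OF assms]) simp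

lemma grad_gP:
  assumes "x \<in> interior (polytope_P nu lam r)"
  shows "grad (gP nu lam r) x $ i = FF nu lam r i x"
  using frechet_derivative_at[OF gP_deriv[OF assms], symmetric]
  by (simp add: grad_def FF_def inner_axis)

lemma FF_diff:
  assumes "x \<in> interior (polytope_P nu lam r)"
  shows "FF nu lam r i differentiable (at x)"
proof -
  have "(\<lambda>z. nu j $ i * (ln (aff nu lam j z) + 1)) differentiable (at x)" if "j < r" for j
  proof (cases "nu j = 0")
    case True then show ?thesis by simp
  next
    case False
    then have p: "aff nu lam j x > 0" using int_pos assms that by blast
    show ?thesis
      using has_derivative_ln[OF p aff_deriv]
      by (intro differentiable_mult differentiable_add differentiable_const) (auto simp: differentiable_def)
  qed
  then show ?thesis unfolding FF_def[abs_def]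
    by (intro differentiable_mult differentiable_sum differentiable_const) auto
qed
lemma grad_deriv:
  fixes f :: "real^'n \<Rightarrow> real"
  assumes "f differentiable (at x)"
  shows "(f has_derivative (\<lambda>h. inner (grad f x) h)) (at x)"
proof -
  let ?D = "frechet_derivative f (at x)"
  have d: "(f has_derivative ?D) (at x)" using assms frechet_derivative_works by blast
  then have lin: "linear ?D" using has_derivative_linear by blast
  have "?D h = inner (grad f x) h" for h
  proof -
    have "?D h = ?D (\<Sum>i\<in>UNIV. h $ i *\<^sub>R axis i 1)"
      by (metis (no_types) basis_expansion scalar_mult_eq_scaleR)
    also have "\<dots> = (\<Sum>i\<in>UNIV. h $ i * ?D (axis i 1))"
      using lin by (simp add: linear_sum linear_scale)
    also have "\<dots> = inner (grad f x) h"
      by (simp add: grad_def inner_vec_def mult.commute)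
    finally show ?thesis .
  qed
  then have "?D = (\<lambda>h. inner (grad f x) h)" by auto
  with d show ?thesis by simp
qed

lemma hess_row: "hess G x $ i = grad (\<lambda>z. grad G z $ i) x"
  by (simp add: hess_def grad_def vec_eq_iff)

lemma key_deriv:
  fixes G :: "real^'n \<Rightarrow> real"
  assumes dG: "G differentiable (at (m + t *\<^sub>R v))"
    and dg: "\<And>i. (\<lambda>z. grad G z $ i) differentiable (at (m + t *\<^sub>R v))"
  shows "((\<lambda>t. inner (m - (m + t *\<^sub>R v)) (grad G (m + t *\<^sub>R v)) + G (m + t *\<^sub>R v))
          has_real_derivative -(t * inner v (hess G (m + t *\<^sub>R v) *v v))) (at t)"
proof -
  let ?w = "m + t *\<^sub>R v"
  have line: "((\<lambda>t. m + t *\<^sub>R v) has_derivative (\<lambda>h. h *\<^sub>R v)) (at t)"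
    by (auto intro!: derivative_eq_intros)
  have ci: "((\<lambda>t. grad G (m + t *\<^sub>R v) $ i) has_real_derivative inner (hess G ?w $ i) v) (at t)" for i
  proof -
    have "((\<lambda>t. grad G (m + t *\<^sub>R v) $ i) has_derivative (\<lambda>h. inner (hess G ?w $ i) (h *\<^sub>R v))) (at t)"
      using has_derivative_compose[OF line grad_deriv[OF dg[of i]]] by (simp add: hess_row)
    moreover have "(\<lambda>h. inner (hess G ?w $ i) (h *\<^sub>R v)) = (*) (inner (hess G ?w $ i) v)"
      by (auto simp: mult.commute)
    ultimately show ?thesis by (simp add: has_field_derivative_def)
  qed
  have cG: "((\<lambda>t. G (m + t *\<^sub>R v)) has_real_derivative inner (grad G ?w) v) (at t)"
  proof -
    have "((\<lambda>t. G (m + t *\<^sub>R v)) has_derivative (\<lambda>h. inner (grad G ?w) (h *\<^sub>R v))) (at t)"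
      using has_derivative_compose[OF line grad_deriv[OF dG]] by simp
    moreover have "(\<lambda>h. inner (grad G ?w) (h *\<^sub>R v)) = (*) (inner (grad G ?w) v)"
      by (auto simp: mult.commute)
    ultimately show ?thesis by (simp add: has_field_derivative_def)
  qed
  have eq: "(\<lambda>t. inner (m - (m + t *\<^sub>R v)) (grad G (m + t *\<^sub>R v)) + G (m + t *\<^sub>R v))
     = (\<lambda>t. - t * (\<Sum>i\<in>UNIV. v $ i * grad G (m + t *\<^sub>R v) $ i) + G (m + t *\<^sub>R v))"
    by (auto simp: inner_vec_def sum_distrib_left mult.assoc)
  have "((\<lambda>t. - t * (\<Sum>i\<in>UNIV. v $ i * grad G (m + t *\<^sub>R v) $ i) + G (m + t *\<^sub>R v))
     has_real_derivative (- 1 * (\<Sum>i\<in>UNIV. v $ i * grad G ?w $ i) + - t * (\<Sum>i\<in>UNIV. v $ i * inner (hess G ?w $ i) v)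
        + inner (grad G ?w) v)) (at t)"
  proof -
    have d1: "((\<lambda>x. - x) has_real_derivative - 1) (at t)" by (rule DERIV_minus[OF DERIV_ident])
    have d2: "((\<lambda>x. \<Sum>i\<in>UNIV. v $ i * grad G (m + x *\<^sub>R v) $ i) has_real_derivative
       (\<Sum>i\<in>UNIV. v $ i * inner (hess G ?w $ i) v)) (at t)"
      by (intro DERIV_sum DERIV_cmult ci)
    show ?thesis using DERIV_add[OF DERIV_mult[OF d1 d2] cG] by (simp add: mult.commute)
  qed
  moreover have "- 1 * (\<Sum>i\<in>UNIV. v $ i * grad G ?w $ i) + - t * (\<Sum>i\<in>UNIV. v $ i * inner (hess G ?w $ i) v)
        + inner (grad G ?w) v = -(t * inner v (hess G ?w *v v))"
    by (simp add: inner_vec_def matrix_vector_mult_def mult.commute)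
  ultimately show ?thesis unfolding eq by simp
qed

lemma mono_gen:
  fixes G :: "real^'n \<Rightarrow> real"
  assumes dG: "\<And>t. t \<in> {0..t2} \<Longrightarrow> G differentiable (at (m + t *\<^sub>R v))"
    and dg: "\<And>t i. t \<in> {0..t2} \<Longrightarrow> (\<lambda>z. grad G z $ i) differentiable (at (m + t *\<^sub>R v))"
    and nd: "\<And>t. t \<in> {0..t2} \<Longrightarrow> neg_def (hess G (m + t *\<^sub>R v))"
    and v: "v \<noteq> 0" and t: "0 \<le> t1" "t1 < t2"
  shows "inner (m - (m + t1 *\<^sub>R v)) (grad G (m + t1 *\<^sub>R v)) + G (m + t1 *\<^sub>R v)
       < inner (m - (m + t2 *\<^sub>R v)) (grad G (m + t2 *\<^sub>R v)) + G (m + t2 *\<^sub>R v)"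
proof -
  let ?f = "\<lambda>t. inner (m - (m + t *\<^sub>R v)) (grad G (m + t *\<^sub>R v)) + G (m + t *\<^sub>R v)"
  have D: "(?f has_real_derivative -(t * inner v (hess G (m + t *\<^sub>R v) *v v))) (at t)"
    if "t \<in> {0..t2}" for t
    using key_deriv[OF dG[OF that] dg[OF that]] .
  show ?thesis
  proof (rule DERIV_pos_imp_increasing_open[where f = ?f, OF t(2)])
    fix x assume x: "t1 < x" "x < t2"
    then have xi: "x \<in> {0..t2}" using t by auto
    have "inner v (hess G (m + x *\<^sub>R v) *v v) < 0" using nd[OF xi] v by (simp add: neg_def_def)
    moreover have "x > 0" using x t by simp
    ultimately have "-(x * inner v (hess G (m + x *\<^sub>R v) *v v)) > 0"
      by (simp add: mult_pos_neg)
    then show "\<exists>y. (?f has_real_derivative y) (at x) \<and> 0 < y" using D[OF xi] by blast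
  next
    show "continuous_on {t1..t2} ?f"
    proof (rule continuous_at_imp_continuous_on, rule ballI)
      fix x assume "x \<in> {t1..t2}"
      then have "x \<in> {0..t2}" using t by auto
      from DERIV_isCont[OF D[OF this]] show "isCont ?f x" .
    qed
  qed
qed

lemma psi_facts:
  assumes "smooth_on S psi" "open S" "x \<in> S"
  shows "psi differentiable (at x)" "partial psi i differentiable (at x)"
proof -
  have "(fold (\<lambda>i h. partial h i) [] psi) differentiable_on S" using assms(1) smooth_on_def by blast
  then show "psi differentiable (at x)" using assms by (simp add: differentiable_on_eq_differentiable_at)
  have "(fold (\<lambda>i h. partial h i) [i] psi) differentiable_on S" using assms(1) smooth_on_def by blast
  then show "partial psi i differentiable (at x)" using assms by (simp add: differentiable_on_eq_differentiable_at)
qed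

lemma gs_facts:
  assumes sm: "smooth_on S psi" "open S" "polytope_P nu lam r \<subseteq> S"
    and x: "x \<in> interior (polytope_P nu lam r)"
  shows "gs nu lam r psi s differentiable (at x)"
    "(\<lambda>z. grad (gs nu lam r psi s) z $ i) differentiable (at x)"
proof -
  have inS: "z \<in> S" if "z \<in> interior (polytope_P nu lam r)" for z
    using that sm(3) interior_subset by blast
  have gd: "(gs nu lam r psi s has_derivative
      (\<lambda>h. 1/2 * (\<Sum>j<r. inner (nu j) h * (ln (aff nu lam j z) + 1)) + s * frechet_derivative psi (at z) h)) (at z)"
    if "z \<in> interior (polytope_P nu lam r)" for z
    unfolding gs_def[abs_def]
    by (intro has_derivative_add has_derivative_mult_right gP_deriv[OF that]
        frechet_derivative_works[THEN iffD1, OF psi_facts(1)[OF sm(1,2) inS[OF that]]])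
  then show "gs nu lam r psi s differentiable (at x)" using x by (auto simp: differentiable_def)
  have geq: "grad (gs nu lam r psi s) z $ i = FF nu lam r i z + s * partial psi i z"
    if "z \<in> interior (polytope_P nu lam r)" for z
    using frechet_derivative_at[OF gd[OF that], symmetric]
    by (simp add: grad_def FF_def inner_axis partial_def)
  have "(\<lambda>z. FF nu lam r i z + s * partial psi i z) differentiable (at x)"
    by (intro differentiable_add differentiable_mult differentiable_const FF_diff[OF x]
        psi_facts(2)[OF sm(1,2) inS[OF x]])
  then obtain D where "((\<lambda>z. FF nu lam r i z + s * partial psi i z) has_derivative D) (at x)"
    by (auto simp: differentiable_def)
  then have "((\<lambda>z. grad (gs nu lam r psi s) z $ i) has_derivative D) (at x)"
    by (rule has_derivative_transform_within_open[OF _ open_interior x]) (simp add: geq)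
  then show "(\<lambda>z. grad (gs nu lam r psi s) z $ i) differentiable (at x)"
    by (auto simp: differentiable_def)
qed

theorem mainTheorem12:
  fixes nu :: "nat \<Rightarrow> real^'n" and lam :: "nat \<Rightarrow> real" and r :: nat
    and psi :: "real^'n \<Rightarrow> real" and s :: real and m :: "real^'n" and U :: "(real^'n) set"
  assumes "delzant nu lam r"
    and "smooth_on_closed (polytope_P nu lam r) psi"
    and "\<forall>x\<in>polytope_P nu lam r. pos_def (hess psi x)"
    and "s < - s_neg nu lam r psi"
    and "m \<in> polytope_P nu lam r" and "int_vec m"
    and "island nu lam r psi s U" and "m \<in> U"
  shows "(\<forall>x. closed_segment m x \<subseteq> U \<longrightarrow> sec_norm nu lam r psi s m m \<le> sec_norm nu lam r psi s m x)
       \<and> (\<forall>v t1 t2. v \<noteq> 0 \<longrightarrow> 0 \<le> t1 \<longrightarrow> t1 < t2 \<longrightarrow> (\<forall>t\<in>{0..t2}. m + t *\<^sub>R v \<in> U) \<longrightarrow>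
             sec_norm nu lam r psi s m (m + t1 *\<^sub>R v) < sec_norm nu lam r psi s m (m + t2 *\<^sub>R v))"
proof -
  let ?G = "gs nu lam r psi s"
  obtain S where S: "open S" "polytope_P nu lam r \<subseteq> S" "smooth_on S psi"
    using assms(2) smooth_on_closed_def by blast
  obtain x0 where "U = connected_component_set (negdef_set nu lam r psi s) x0"
    using assms(7) island_def by blast
  then have Usub: "U \<subseteq> negdef_set nu lam r psi s" using connected_component_subset by blast
  have UI: "y \<in> interior (polytope_P nu lam r)" if "y \<in> U" for y
    using Usub that by (auto simp: negdef_set_def)
  have UN: "neg_def (hess ?G y)" if "y \<in> U" for y
    using Usub that by (auto simp: negdef_set_def)
  have mono: "sec_norm nu lam r psi s m (m + t1 *\<^sub>R v) < sec_norm nu lam r psi s m (m + t2 *\<^sub>R v)"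
    if v: "v \<noteq> 0" and t: "0 \<le> t1" "t1 < t2" and inU: "\<forall>t\<in>{0..t2}. m + t *\<^sub>R v \<in> U" for v t1 t2
  proof -
    have "inner (m - (m + t1 *\<^sub>R v)) (grad ?G (m + t1 *\<^sub>R v)) + ?G (m + t1 *\<^sub>R v)
       < inner (m - (m + t2 *\<^sub>R v)) (grad ?G (m + t2 *\<^sub>R v)) + ?G (m + t2 *\<^sub>R v)"
      by (rule mono_gen[OF gs_facts(1)[OF S(3,1,2) UI] gs_facts(2)[OF S(3,1,2) UI] UN v t])
        (use inU in auto)
    then show ?thesis by (simp add: sec_norm_def)
  qed
  have part1: "sec_norm nu lam r psi s m m \<le> sec_norm nu lam r psi s m x"
    if seg: "closed_segment m x \<subseteq> U" for x
  proof (cases "x = m")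
    case True then show ?thesis by simp
  next
    case False
    have "\<forall>t\<in>{0..1}. m + t *\<^sub>R (x - m) \<in> U"
    proof
      fix t :: real assume "t \<in> {0..1}"
      then have "(1 - t) *\<^sub>R m + t *\<^sub>R x \<in> closed_segment m x"
        by (auto simp: closed_segment_def)
      moreover have "(1 - t) *\<^sub>R m + t *\<^sub>R x = m + t *\<^sub>R (x - m)"
        by (simp add: algebra_simps)
      ultimately show "m + t *\<^sub>R (x - m) \<in> U" using seg by auto
    qed
    from mono[of "x - m" 0 1, OF _ _ _ this] False
    show ?thesis by simp
  qed
  show ?thesis using part1 mono by blast
qed

end
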